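(* Let $r$ be a fixed positive integer, $n\ge3$, and let $V$ be a symmetric $n\times n$ matrix in $\mathcal L_n(1/b_n,1/c_n)$ with $b_n\ge c_n>0$. Let $S=\mathrm{diag}(1/v_{11},\dots,1/v_{nn})$, $W=V^{-1}-S$, and let $W_{22}$ be the bottom-right $(n-r)\times(n-r)$ block of $W$. Let $V_{22}$ be the bottom-right $(n-r)\times(n-r)$ block of $V$, $S_{22}=\mathrm{diag}(1/v_{r+1,r+1},\dots,1/v_{nn})$ and $\widetilde W_{22}=V_{22}^{-1}-S_{22}$. Then there is a constant $C$ depending only on $r$ such that for all sufficiently large $n$, $$\|W_{22}-\widetilde W_{22}\|_{\max}\le C\frac{b_n^6}{n^3c_n^5}.$$
   Context: For $m,M>0$, $\mathcal L_n(m,M)$ is the class of $n\times n$ matrices $V=(v_{ij})$ with $v_{ii}=\sum_{j\ne i}v_{ij}$ for $i=1,\dots,n$ and $m\le v_{ij}\le M$ for all $i\ne j$. $\|J\|_{\max}=\max_{i,j}|J_{ij}|$. *)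

theory Defs
  imports "Jordan_Normal_Form.Gauss_Jordan_Elimination"
begin

definition class_L :: "nat \<Rightarrow> real \<Rightarrow> real \<Rightarrow> real mat set" where
  "class_L n m M = {V. V \<in> carrier_mat n n
     \<and> (\<forall>i<n. V $$ (i,i) = (\<Sum>j\<in>{0..<n} - {i}. V $$ (i,j)))
     \<and> (\<forall>i<n. \<forall>j<n. i \<noteq> j \<longrightarrow> m \<le> V $$ (i,j) \<and> V $$ (i,j) \<le> M)}"

definition mat_inv :: "real mat \<Rightarrow> real mat" where
  "mat_inv A = (case mat_inverse A of Some B \<Rightarrow> B | None \<Rightarrow> 0\<^sub>m (dim_row A) (dim_col A))"

definition inv_diag :: "real mat \<Rightarrow> real mat" where
  "inv_diag A = mat (dim_row A) (dim_row A) (\<lambda>(i,j). if i = j then 1 / A $$ (i,i) else 0)"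

definition br_block :: "real mat \<Rightarrow> nat \<Rightarrow> real mat" where
  "br_block A r = mat (dim_row A - r) (dim_col A - r) (\<lambda>(i,j). A $$ (i + r, j + r))"

definition max_norm :: "real mat \<Rightarrow> real" where
  "max_norm A = Max {\<bar>A $$ (i,j)\<bar> | i j. i < dim_row A \<and> j < dim_col A}"

end

theory Submission imports Defs "Jordan_Normal_Form.Determinant" begin

lemma sum_offdiag_swap:
  fixes f :: "nat \<Rightarrow> nat \<Rightarrow> real"
  shows "(\<Sum>i<N. \<Sum>l<N. if l = i then 0 else f i l) = (\<Sum>i<N. \<Sum>l<N. if l = i then 0 else f l i)"
  by (subst sum.swap) (auto intro!: sum.cong)

lemma qf:
  fixes A :: "nat \<Rightarrow> nat \<Rightarrow> real" and u :: "nat \<Rightarrow> real"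
  assumes sym: "\<forall>i<N. \<forall>j<N. A i j = A j i"
    and off: "\<forall>i<N. \<forall>j<N. i \<noteq> j \<longrightarrow> m \<le> A i j"
    and dd: "\<forall>i<N. (\<Sum>j\<in>{..<N}-{i}. A i j) \<le> A i i"
    and m0: "m \<ge> 0"
  shows "m * (real N - 2) * (\<Sum>i<N. (u i)^2) \<le> (\<Sum>i<N. u i * (\<Sum>l<N. A i l * u l))"
proof -
  let ?s = "\<Sum>i<N. (u i)^2" and ?t = "\<Sum>i<N. u i"
  have split: "(\<Sum>l<N. g l) = g i + (\<Sum>l<N. if l = i then 0 else g l)" if "i < N" for i and g :: "nat \<Rightarrow> real"
  proof -
    have "(\<Sum>l<N. g l) = (\<Sum>l<N. (if l = i then g l else 0) + (if l = i then 0 else g l))"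
      by (auto intro!: sum.cong)
    also have "\<dots> = g i + (\<Sum>l<N. if l = i then 0 else g l)"
      using that by (simp add: sum.distrib)
    finally show ?thesis .
  qed
  have dsum: "(\<Sum>j\<in>{..<N}-{i}. A i j) = (\<Sum>l<N. if l = i then 0 else A i l)" for i
    by (simp add: sum.If_cases Diff_eq Int_commute)
  have step1: "(\<Sum>i<N. \<Sum>l<N. if l = i then 0 else A i l * ((u i)^2 + u i * u l))
      \<le> (\<Sum>i<N. u i * (\<Sum>l<N. A i l * u l))"
  proof (rule sum_mono)
    fix i assume i: "i \<in> {..<N}"
    have "u i * (\<Sum>l<N. A i l * u l) = A i i * (u i)^2 + (\<Sum>l<N. if l = i then 0 else A i l * (u i * u l))"
      using split[of i "\<lambda>l. A i l * u l"] i by (simp add: sum_distrib_left power2_eq_square if_distrib algebra_simps cong: if_cong)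
    moreover have "(\<Sum>l<N. if l = i then 0 else A i l * ((u i)^2 + u i * u l))
        = (\<Sum>l<N. if l = i then 0 else A i l) * (u i)^2 + (\<Sum>l<N. if l = i then 0 else A i l * (u i * u l))"
    proof -
      have "(\<Sum>l<N. if l = i then 0 else A i l * ((u i)^2 + u i * u l))
          = (\<Sum>l<N. (if l = i then 0 else A i l) * (u i)^2 + (if l = i then 0 else A i l * (u i * u l)))"
        by (rule sum.cong) (auto simp: algebra_simps)
      then show ?thesis by (simp add: sum.distrib sum_distrib_right)
    qed
    moreover have "(\<Sum>l<N. if l = i then 0 else A i l) * (u i)^2 \<le> A i i * (u i)^2"
      using dd i dsum[of i] by (intro mult_right_mono) auto
    ultimately show "(\<Sum>l<N. if l = i then 0 else A i l * ((u i)^2 + u i * u l)) \<le> u i * (\<Sum>l<N. A i l * u l)"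
      by linarith
  qed
  have swap: "(\<Sum>i<N. \<Sum>l<N. if l = i then 0 else A i l * ((u i)^2 + u i * u l))
      = (\<Sum>i<N. \<Sum>l<N. if l = i then 0 else A i l * ((u l)^2 + u i * u l))"
    apply (subst sum_offdiag_swap)
    using sym by (auto intro!: sum.cong simp: algebra_simps)
  have two: "2 * (\<Sum>i<N. \<Sum>l<N. if l = i then 0 else A i l * ((u i)^2 + u i * u l))
      = (\<Sum>i<N. \<Sum>l<N. if l = i then 0 else A i l * (u i + u l)^2)"
  proof -
    have "2 * (\<Sum>i<N. \<Sum>l<N. if l = i then 0 else A i l * ((u i)^2 + u i * u l))
       = (\<Sum>i<N. \<Sum>l<N. if l = i then 0 else A i l * ((u i)^2 + u i * u l))
         + (\<Sum>i<N. \<Sum>l<N. if l = i then 0 else A i l * ((u l)^2 + u i * u l))"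
      using swap by simp
    also have "\<dots> = (\<Sum>i<N. \<Sum>l<N. if l = i then 0 else A i l * (u i + u l)^2)"
      by (simp add: sum.distrib[symmetric] power2_sum algebra_simps cong: if_cong)
         (auto intro!: sum.cong simp: algebra_simps power2_eq_square)
    finally show ?thesis .
  qed
  have lb: "(\<Sum>i<N. \<Sum>l<N. if l = i then 0 else A i l * (u i + u l)^2)
      \<ge> m * (\<Sum>i<N. \<Sum>l<N. if l = i then 0 else (u i + u l)^2)"
    unfolding sum_distrib_left
    using off by (auto intro!: sum_mono mult_right_mono)
  have full: "(\<Sum>i<N. \<Sum>l<N. (u i + u l)^2) = 2 * real N * ?s + 2 * ?t^2"
    by (simp add: power2_sum sum.distrib sum_distrib_left sum_distrib_right power2_eq_square algebra_simps)
  have offs: "(\<Sum>i<N. \<Sum>l<N. if l = i then 0 else (u i + u l)^2) = (\<Sum>i<N. \<Sum>l<N. (u i + u l)^2) - 4 * ?s"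
  proof -
    have "(\<Sum>i<N. \<Sum>l<N. (u i + u l)^2) = (\<Sum>i<N. (u i + u i)^2 + (\<Sum>l<N. if l = i then 0 else (u i + u l)^2))"
      by (intro sum.cong refl split) auto
    also have "\<dots> = 4 * ?s + (\<Sum>i<N. \<Sum>l<N. if l = i then 0 else (u i + u l)^2)"
      by (simp add: sum.distrib sum_distrib_left power2_eq_square)
    finally show ?thesis by simp
  qed
  have "m * (2 * (real N - 2) * ?s) \<le> m * (\<Sum>i<N. \<Sum>l<N. if l = i then 0 else (u i + u l)^2)"
    using m0 offs full by (intro mult_left_mono) (auto simp: algebra_simps)
  then show ?thesis using lb two step1 by (simp add: algebra_simps)
qed

lemma sq_le_sum: "i < (N::nat) \<Longrightarrow> (u i)^2 \<le> (\<Sum>i<N. (u i)^2 :: real)"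
  using member_le_sum[of i "{..<N}" "\<lambda>i. (u i)^2"] by auto

lemma cs_abs: "(\<Sum>i<N. \<bar>u i\<bar>)^2 \<le> real N * (\<Sum>i<N. (u i)^2 :: real)"
proof -
  have "0 \<le> (\<Sum>i<N. \<Sum>l<N. (\<bar>u i\<bar> - \<bar>u l\<bar>)^2)" by (intro sum_nonneg) auto
  also have "\<dots> = 2 * real N * (\<Sum>i<N. (u i)^2) - 2 * (\<Sum>i<N. \<bar>u i\<bar>)^2"
    by (simp add: power2_diff sum.distrib sum_subtractf sum_distrib_left sum_distrib_right power2_eq_square algebra_simps)
  finally show ?thesis by simp
qed

locale qfhyp =
  fixes N :: nat and A :: "nat \<Rightarrow> nat \<Rightarrow> real" and m :: real
  assumes sym: "\<forall>i<N. \<forall>j<N. A i j = A j i"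
    and off: "\<forall>i<N. \<forall>j<N. i \<noteq> j \<longrightarrow> m \<le> A i j"
    and dd: "\<forall>i<N. (\<Sum>j\<in>{..<N}-{i}. A i j) \<le> A i i"
    and mpos: "m > 0" and N3: "N \<ge> 3"
begin

lemma qf': "m * (real N - 2) * (\<Sum>i<N. (u i)^2) \<le> (\<Sum>i<N. u i * (\<Sum>l<N. A i l * u l))"
  by (rule qf) (use sym off dd mpos in auto)

lemma apos: "m * (real N - 2) > 0" using mpos N3 by simp

lemma kern:
  assumes "\<forall>i<N. (\<Sum>l<N. A i l * u l) = 0"
  shows "\<forall>i<N. u i = 0"
proof -
  have "m * (real N - 2) * (\<Sum>i<N. (u i)^2) \<le> 0" using qf'[of u] assms by simp
  hence "(\<Sum>i<N. (u i)^2) \<le> 0" using apos by (smt (verit) mult_pos_pos)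
  thus ?thesis using sq_le_sum[of _ N u] by (smt (verit) zero_le_power2 power_eq_0_iff)
qed

lemma plem:
  assumes k: "k < N" and eq: "\<forall>i<N. (\<Sum>l<N. A i l * x l) = (if i = k then 1 else 0)"
  shows "\<forall>j<N. \<bar>x j\<bar> \<le> 1 / (m * (real N - 2))"
proof -
  define a where "a = m * (real N - 2)"
  define s where "s = (\<Sum>i<N. (x i)^2)"
  have a0: "a > 0" using apos a_def by simp
  have "(\<Sum>i<N. x i * (\<Sum>l<N. A i l * x l)) = (\<Sum>i<N. x i * (if i = k then 1 else 0))"
    using eq by (intro sum.cong) auto
  also have "\<dots> = (\<Sum>i<N. if i = k then x i else 0)"
    by (intro sum.cong) auto
  also have "\<dots> = x k" using k by simp
  finally have as: "a * s \<le> x k" using qf'[of x] a_def s_def by simp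
  have xk: "(x k)^2 \<le> s" using sq_le_sum[OF k] s_def by simp
  have s0: "s \<ge> 0" unfolding s_def by (intro sum_nonneg) auto
  have xk0: "x k \<ge> 0" using as a0 s0 by (smt (verit) mult_nonneg_nonneg)
  have "a * (x k)^2 \<le> x k" using as xk a0 by (smt (verit) mult_left_mono)
  have "x k \<le> 1 / a"
  proof (cases "x k = 0")
    case True thus ?thesis using a0 by simp
  next
    case False
    hence p: "x k > 0" using xk0 by simp
    from \<open>a * (x k)^2 \<le> x k\<close> have "(a * x k) * x k \<le> 1 * x k" by (simp add: power2_eq_square mult.assoc)
    hence "a * x k \<le> 1" using p by (rule mult_right_le_imp_le)
    thus ?thesis using a0 by (simp add: field_simps mult.commute)
  qed
  hence "a * s \<le> 1 / a" using as by simp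
  hence sb: "s \<le> (1/a)^2" using a0 by (simp add: field_simps power2_eq_square)
  show ?thesis
  proof (intro allI impI)
    fix j assume j: "j < N"
    have "(x j)^2 \<le> (1/a)^2" using sq_le_sum[OF j, of x] sb s_def by simp
    hence "\<bar>x j\<bar> \<le> \<bar>1/a\<bar>" using abs_le_square_iff by blast
    thus "\<bar>x j\<bar> \<le> 1 / (m * (real N - 2))" using a0 a_def by simp
  qed
qed

lemma ulem:
  assumes offM: "\<forall>i<N. \<forall>j<N. i \<noteq> j \<longrightarrow> A i j \<le> M"
    and diag: "\<forall>i<N. Dg \<le> A i i" and Dg: "Dg > 0"
    and eq: "\<forall>i<N. (\<Sum>l<N. A i l * u l) = y i"
    and yb: "\<forall>i<N. \<bar>y i\<bar> \<le> M"
  shows "\<forall>i<N. \<bar>u i\<bar> * Dg \<le> M + M * (3 * M / m)"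
proof -
  define a where "a = m * (real N - 2)"
  define s where "s = (\<Sum>i<N. (u i)^2)"
  define t where "t = (\<Sum>i<N. \<bar>u i\<bar>)"
  have a0: "a > 0" using apos a_def by simp
  have t0: "t \<ge> 0" unfolding t_def by (intro sum_nonneg) auto
  have "(\<Sum>i<N. u i * (\<Sum>l<N. A i l * u l)) = (\<Sum>i<N. u i * y i)"
    using eq by (auto intro!: sum.cong)
  also have "\<dots> \<le> (\<Sum>i<N. \<bar>u i\<bar> * M)"
  proof (rule sum_mono)
    fix i assume "i \<in> {..<N}"
    hence "\<bar>y i\<bar> \<le> M" using yb by auto
    hence "\<bar>u i * y i\<bar> \<le> \<bar>u i\<bar> * M" by (simp add: abs_mult mult_left_mono)
    thus "u i * y i \<le> \<bar>u i\<bar> * M" by linarith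
  qed
  also have "\<dots> = M * t" unfolding t_def sum_distrib_left by (simp add: mult.commute)
  finally have as: "a * s \<le> M * t" using qf'[of u] a_def s_def by simp
  have cs: "t^2 \<le> real N * s" using cs_abs[of u N] t_def s_def by simp
  have "a * t^2 \<le> a * (real N * s)" using cs a0 by (intro mult_left_mono) auto
  also have "\<dots> \<le> real N * (M * t)" using as N3 by (simp add: algebra_simps mult_left_mono)
  finally have "a * t * t \<le> (real N * M) * t" by (simp add: power2_eq_square algebra_simps)
  hence tb1: "a * t \<le> real N * M" if "t > 0" using that by simp
  have M0: "M \<ge> 0" using yb N3 by (meson abs_ge_zero order_trans less_le_trans zero_less_numeral) 
  have tb: "t \<le> 3 * M / m"
  proof (cases "t > 0")
    case True
    have "real N \<le> 3 * (real N - 2)" using N3 by simp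
    hence "real N * M \<le> 3 * (real N - 2) * M" using M0 by (intro mult_right_mono) auto
    hence "a * t \<le> 3 * (real N - 2) * M" using tb1[OF True] by simp
    hence "(m * t) * (real N - 2) \<le> (3 * M) * (real N - 2)" using a_def by (simp add: algebra_simps)
    moreover have "real N - 2 > 0" using N3 by simp
    ultimately have "m * t \<le> 3 * M" by (rule mult_right_le_imp_le)
    thus ?thesis using mpos by (simp add: field_simps)
  next
    case False thus ?thesis using t0 M0 mpos by simp
  qed
  show ?thesis
  proof (intro allI impI)
    fix i assume i: "i < N"
    have split: "(\<Sum>l<N. A i l * u l) = A i i * u i + (\<Sum>l<N. if l = i then 0 else A i l * u l)"
    proof -
      have "(\<Sum>l<N. A i l * u l) = (\<Sum>l<N. (if l = i then A i l * u l else 0) + (if l = i then 0 else A i l * u l))"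
        by (auto intro!: sum.cong)
      thus ?thesis using i by (simp add: sum.distrib)
    qed
    have rb: "\<bar>\<Sum>l<N. if l = i then 0 else A i l * u l\<bar> \<le> M * t"
    proof -
      have "\<bar>\<Sum>l<N. if l = i then 0 else A i l * u l\<bar> \<le> (\<Sum>l<N. \<bar>if l = i then 0 else A i l * u l\<bar>)"
        by (rule sum_abs)
      also have "\<dots> \<le> (\<Sum>l<N. M * \<bar>u l\<bar>)"
      proof (rule sum_mono)
        fix l assume l: "l \<in> {..<N}"
        show "\<bar>if l = i then 0 else A i l * u l\<bar> \<le> M * \<bar>u l\<bar>"
        proof (cases "l = i")
          case False
          hence "m \<le> A i l" "A i l \<le> M" using off offM i l by auto
          hence "\<bar>A i l\<bar> \<le> M" using mpos by simp
          thus ?thesis using False by (simp add: abs_mult mult_right_mono)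
        qed (simp add: M0)
      qed
      also have "\<dots> = M * t" by (simp add: t_def sum_distrib_left)
      finally show ?thesis .
    qed
    have "A i i * u i = y i - (\<Sum>l<N. if l = i then 0 else A i l * u l)" using eq i split by simp
    hence "\<bar>A i i * u i\<bar> \<le> M + M * t" using yb i rb by (smt (verit))
    moreover have "\<bar>u i\<bar> * Dg \<le> \<bar>A i i * u i\<bar>"
    proof -
      have "Dg \<le> \<bar>A i i\<bar>" using diag i by force
      hence "\<bar>u i\<bar> * Dg \<le> \<bar>u i\<bar> * \<bar>A i i\<bar>" by (rule mult_left_mono) simp
      thus ?thesis by (simp add: abs_mult mult.commute)
    qed
    moreover have "M * t \<le> M * (3 * M / m)" using tb M0 by (rule mult_left_mono)
    ultimately show "\<bar>u i\<bar> * Dg \<le> M + M * (3 * M / m)" by linarith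
  qed
qed

end


lemma mult_entry:
  assumes "A \<in> carrier_mat n k" "B \<in> carrier_mat k p" "i < n" "j < p"
  shows "(A * B) $$ (i,j) = (\<Sum>l<k. A $$ (i,l) * B $$ (l,j))"
  using assms by (auto simp: scalar_prod_def atLeast0LessThan intro!: sum.cong)

lemma split_sum:
  fixes f :: "nat \<Rightarrow> real"
  assumes "r \<le> n"
  shows "(\<Sum>l<n. f l) = (\<Sum>l<r. f l) + (\<Sum>l<n-r. f (l+r))"
proof -
  have "(\<Sum>l<n. f l) = sum f {0..<r} + sum f {r..<n}"
    using assms by (simp add: sum.atLeastLessThan_concat atLeast0LessThan[symmetric])
  also have "sum f {r..<n} = sum f {0+r..<(n-r)+r}" using assms by simp
  also have "\<dots> = (\<Sum>l\<in>{0..<n-r}. f (l+r))" by (rule sum.shift_bounds_nat_ivl)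
  finally show ?thesis by (simp add: atLeast0LessThan)
qed

lemma sum_bound:
  fixes f g :: "nat \<Rightarrow> real"
  assumes "\<forall>k<r. \<bar>f k\<bar> \<le> F" "\<forall>k<r. \<bar>g k\<bar> \<le> G"
  shows "\<bar>\<Sum>k<r. f k * g k\<bar> \<le> real r * F * G"
proof -
  have "\<bar>\<Sum>k<r. f k * g k\<bar> \<le> (\<Sum>k<r. \<bar>f k * g k\<bar>)" by (rule sum_abs)
  also have "\<dots> \<le> (\<Sum>k<r. F * G)"
  proof (rule sum_mono)
    fix k assume "k \<in> {..<r}"
    hence "\<bar>f k\<bar> \<le> F" "\<bar>g k\<bar> \<le> G" using assms by auto
    thus "\<bar>f k * g k\<bar> \<le> F * G" by (simp add: abs_mult mult_mono' order_trans[OF abs_ge_zero])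
  qed
  finally show ?thesis by simp
qed

lemma inv_exists:
  assumes A: "A \<in> carrier_mat k k" and f: "\<forall>i<k. \<forall>j<k. A $$ (i,j) = f i j" and q: "qfhyp k f m"
  shows "A * mat_inv A = 1\<^sub>m k \<and> mat_inv A * A = 1\<^sub>m k \<and> mat_inv A \<in> carrier_mat k k"
proof -
  interpret qfhyp k f m by (rule q)
  have "det A \<noteq> 0"
  proof
    assume "det A = 0"
    then obtain v where v: "v \<in> carrier_vec k" "v \<noteq> 0\<^sub>v k" "A *\<^sub>v v = 0\<^sub>v k"
      using det_0_iff_vec_prod_zero[OF A] by auto
    have "\<forall>i<k. (\<Sum>l<k. f i l * v $ l) = 0"
    proof (intro allI impI)
      fix i assume i: "i < k"
      have "(A *\<^sub>v v) $ i = 0" using v(3) i by simp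
      thus "(\<Sum>l<k. f i l * v $ l) = 0" using A v(1) i f
        by (auto simp: scalar_prod_def atLeast0LessThan)
    qed
    hence "\<forall>i<k. v $ i = 0" by (rule kern)
    hence "v = 0\<^sub>v k" using v(1) by auto
    with v(2) show False by simp
  qed
  hence U: "A \<in> Units (ring_mat TYPE(real) k undefined)" by (rule det_non_zero_imp_unit[OF A])
  obtain B where B: "mat_inverse A = Some B"
    using mat_inverse(1)[OF A, of undefined] U by (cases "mat_inverse A") auto
  thus ?thesis using mat_inverse(2)[OF A B] by (simp add: mat_inv_def)
qed


lemma final_arith:
  fixes b c \<beta> \<gamma> :: real and n r :: nat
  assumes c0: "0 < c" and cb: "c \<le> b" and n3: "n \<ge> 3" and b0: "0 \<le> \<beta>"
    and bb: "\<beta> \<le> 4 * (b/c)^2 / (real n - 1)" and g0: "0 \<le> \<gamma>" and gb: "\<gamma> \<le> b / (real n - 2)"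
  shows "real r * (real r * \<beta> * \<gamma>) * \<beta> \<le> 112 * (real r)^2 * b^6 / (real n^3 * c^5)"
proof -
  define k where "k = b / c"
  have k1: "k \<ge> 1" using c0 cb by (simp add: k_def field_simps)
  have bpos: "b > 0" using c0 cb by simp
  have n1: "real n - 1 > 0" "real n - 2 > 0" using n3 by auto
  have "\<beta> * \<beta> * \<gamma> \<le> (4 * k^2 / (real n - 1)) * (4 * k^2 / (real n - 1)) * (b / (real n - 2))"
    using bb gb b0 g0 k_def by (intro mult_mono) auto
  also have "\<dots> = 16 * k^4 * b / ((real n - 1)^2 * (real n - 2))"
    by (simp add: field_simps power2_eq_square power4_eq_xxxx)
  also have "\<dots> \<le> 112 * k^5 * b / (real n)^3"
  proof -
    have poly: "(real n)^3 \<le> 7 * ((real n - 1)^2 * (real n - 2))"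
    proof -
      define t where "t = real n - 3"
      have t0: "t \<ge> 0" using n3 t_def by simp
      have "real n = t + 3" using t_def by simp
      hence "7 * ((real n - 1)^2 * (real n - 2)) - (real n)^3 = 1 + 29*t + 26*t^2 + 6*t^3"
        by (simp add: power2_eq_square power3_eq_cube algebra_simps)
      moreover have "0 \<le> 1 + 29*t + 26*t^2 + 6*t^3" using t0 by simp
      ultimately show ?thesis by simp
    qed
    have kb: "16 * k^4 * b \<ge> 0" using bpos k1 by simp
    have "16 * k^4 * b * (real n)^3 \<le> 16 * k^4 * b * (7 * ((real n - 1)^2 * (real n - 2)))"
      using poly kb by (rule mult_left_mono)
    also have "\<dots> \<le> 112 * k^5 * b * ((real n - 1)^2 * (real n - 2))"
    proof -
      have "k^4 \<le> k^5" using k1 by (simp add: power_increasing)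
      hence "112 * k^4 * b * ((real n - 1)^2 * (real n - 2)) \<le> 112 * k^5 * b * ((real n - 1)^2 * (real n - 2))"
        using bpos n1 by (intro mult_right_mono) auto
      thus ?thesis by simp
    qed
    finally have "16 * k^4 * b * (real n)^3 \<le> 112 * k^5 * b * ((real n - 1)^2 * (real n - 2))" .
    thus ?thesis using n1 n3 by (simp add: divide_simps)
  qed
  also have "\<dots> = 112 * b^6 / (real n^3 * c^5)"
    using c0 by (simp add: k_def field_simps power_divide) (simp add: numeral_eq_Suc)
  finally have main: "\<beta> * \<beta> * \<gamma> \<le> 112 * b^6 / (real n^3 * c^5)" .
  have "real r * (real r * \<beta> * \<gamma>) * \<beta> = (real r)^2 * (\<beta> * \<beta> * \<gamma>)"
    by (simp add: power2_eq_square algebra_simps)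
  also have "\<dots> \<le> (real r)^2 * (112 * b^6 / (real n^3 * c^5))"
    using main by (intro mult_left_mono) auto
  also have "\<dots> = 112 * (real r)^2 * b^6 / (real n^3 * c^5)" by (simp add: algebra_simps)
  finally show ?thesis .
qed


lemma main_bound:
  fixes V :: "real mat" and bb cc :: real and n r :: nat
  assumes c0: "0 < cc" and cb: "cc \<le> bb" and nr: "n \<ge> r + 3"
    and VL: "V \<in> class_L n (1/bb) (1/cc)" and Vt: "transpose_mat V = V"
  shows "max_norm (br_block (mat_inv V - inv_diag V) r
                 - (mat_inv (br_block V r) - inv_diag (br_block V r)))
         \<le> 112 * (real r)^2 * bb^6 / (real n^3 * cc^5)"
proof -
  define m where "m = 1 / bb"
  define M where "M = 1 / cc"
  define n' where "n' = n - r"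
  have bpos: "bb > 0" using c0 cb by simp
  have mpos: "m > 0" using bpos m_def by simp
  have n3: "n \<ge> 3" and n'3: "n' \<ge> 3" using nr n'_def by auto
  have Vc: "V \<in> carrier_mat n n" using VL by (simp add: class_L_def)
  have Vdiag: "\<forall>i<n. V $$ (i,i) = (\<Sum>j\<in>{0..<n} - {i}. V $$ (i,j))" using VL by (simp add: class_L_def)
  have Voff: "\<forall>i<n. \<forall>j<n. i \<noteq> j \<longrightarrow> m \<le> V $$ (i,j) \<and> V $$ (i,j) \<le> M"
    using VL by (simp add: class_L_def m_def M_def)
  have Vsym: "\<forall>i<n. \<forall>j<n. V $$ (i,j) = V $$ (j,i)"
  proof (intro allI impI)
    fix i j assume "i < n" "j < n"
    hence "transpose_mat V $$ (i,j) = V $$ (j,i)" using Vc by simp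
    thus "V $$ (i,j) = V $$ (j,i)" using Vt by simp
  qed
  have qV: "qfhyp n (\<lambda>i j. V $$ (i,j)) m"
    by unfold_locales (use Vsym Voff Vdiag mpos n3 in \<open>auto simp: atLeast0LessThan\<close>)
  have qV22: "qfhyp n' (\<lambda>i j. V $$ (i+r,j+r)) m"
  proof unfold_locales
    show "\<forall>i<n'. \<forall>j<n'. V $$ (i+r,j+r) = V $$ (j+r,i+r)" using Vsym n'_def by auto
    show "\<forall>i<n'. \<forall>j<n'. i \<noteq> j \<longrightarrow> m \<le> V $$ (i+r,j+r)" using Voff n'_def by auto
    show "m > 0" by (rule mpos)
    show "n' \<ge> 3" by (rule n'3)
    show "\<forall>i<n'. (\<Sum>j\<in>{..<n'}-{i}. V $$ (i+r,j+r)) \<le> V $$ (i+r,i+r)"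
    proof (intro allI impI)
      fix i assume i: "i < n'"
      have "(\<Sum>j\<in>{..<n'}-{i}. V $$ (i+r,j+r)) = (\<Sum>j\<in>(\<lambda>j. j+r) ` ({..<n'}-{i}). V $$ (i+r,j))"
        by (subst sum.reindex) (auto simp: inj_on_def)
      also have "\<dots> \<le> (\<Sum>j\<in>{0..<n}-{i+r}. V $$ (i+r,j))"
      proof (rule sum_mono2)
        show "finite ({0..<n} - {i + r})" by simp
        show "(\<lambda>j. j + r) ` ({..<n'} - {i}) \<subseteq> {0..<n} - {i + r}" using n'_def by auto
        show "\<And>b. b \<in> {0..<n} - {i + r} - (\<lambda>j. j + r) ` ({..<n'} - {i}) \<Longrightarrow> 0 \<le> V $$ (i + r, b)"
          using Voff mpos i n'_def by (metis Diff_iff atLeastLessThan_iff insertCI less_diff_conv order_less_le order_trans)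
      qed
      also have "\<dots> = V $$ (i+r,i+r)" using Vdiag i n'_def by simp
      finally show "(\<Sum>j\<in>{..<n'}-{i}. V $$ (i+r,j+r)) \<le> V $$ (i+r,i+r)" .
    qed
  qed
  have Dg: "\<forall>i<n. (real n - 1) * m \<le> V $$ (i,i)"
  proof (intro allI impI)
    fix i assume i: "i < n"
    have "real (card ({0..<n} - {i})) * m \<le> (\<Sum>j\<in>{0..<n}-{i}. V $$ (i,j))"
      by (rule sum_bounded_below) (use Voff i in auto)
    moreover have "real (card ({0..<n} - {i})) = real n - 1" using i by simp
    ultimately show "(real n - 1) * m \<le> V $$ (i,i)" using Vdiag i by simp
  qed
  define P where "P = mat_inv V"
  define V22 where "V22 = br_block V r"
  define Q where "Q = mat_inv V22"
  have V22c: "V22 \<in> carrier_mat n' n'" using Vc by (simp add: V22_def br_block_def n'_def)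
  have V22e: "\<forall>i<n'. \<forall>j<n'. V22 $$ (i,j) = V $$ (i+r,j+r)"
    using Vc by (simp add: V22_def br_block_def n'_def)
  have Pinv: "V * P = 1\<^sub>m n \<and> P * V = 1\<^sub>m n \<and> P \<in> carrier_mat n n"
    unfolding P_def by (rule inv_exists[OF Vc _ qV]) simp
  have Qinv: "V22 * Q = 1\<^sub>m n' \<and> Q * V22 = 1\<^sub>m n' \<and> Q \<in> carrier_mat n' n'"
    unfolding Q_def by (rule inv_exists[OF V22c V22e qV22])
  have Pc: "P \<in> carrier_mat n n" and Qc: "Q \<in> carrier_mat n' n'" using Pinv Qinv by auto
  define V21 where "V21 = mat n' r (\<lambda>(i,k). V $$ (i+r,k))"
  define V12 where "V12 = mat r n' (\<lambda>(k,j). V $$ (k,j+r))"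
  define P11 where "P11 = mat r r (\<lambda>(k,l). P $$ (k,l))"
  define P21 where "P21 = mat n' r (\<lambda>(i,k). P $$ (i+r,k))"
  define P22 where "P22 = br_block P r"
  have V21c: "V21 \<in> carrier_mat n' r" and V12c: "V12 \<in> carrier_mat r n'"
    and P11c: "P11 \<in> carrier_mat r r" and P21c: "P21 \<in> carrier_mat n' r"
    and P22c: "P22 \<in> carrier_mat n' n'"
    using Pc by (auto simp: V21_def V12_def P11_def P21_def P22_def br_block_def n'_def)
  have rn: "r \<le> n" and nn': "n = n' + r" using nr n'_def by auto
  have E1: "V21 * P11 + V22 * P21 = 0\<^sub>m n' r"
  proof (rule eq_matI)
    fix i k assume "i < dim_row (0\<^sub>m n' r :: real mat)" "k < dim_col (0\<^sub>m n' r :: real mat)"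
    hence i: "i < n'" and k: "k < r" by auto
    have "(V21 * P11 + V22 * P21) $$ (i,k) = (V21 * P11) $$ (i,k) + (V22 * P21) $$ (i,k)"
      using i k V22c P21c by simp
    also have "\<dots> = (\<Sum>l<r. V $$ (i+r,l) * P $$ (l,k)) + (\<Sum>l<n'. V $$ (i+r,l+r) * P $$ (l+r,k))"
    proof -
      have "(V21 * P11) $$ (i,k) = (\<Sum>l<r. V $$ (i+r,l) * P $$ (l,k))"
        by (simp only: mult_entry[OF V21c P11c i k]) (use i k in \<open>auto simp: V21_def P11_def intro!: sum.cong\<close>)
      moreover have "(V22 * P21) $$ (i,k) = (\<Sum>l<n'. V $$ (i+r,l+r) * P $$ (l+r,k))"
        by (simp only: mult_entry[OF V22c P21c i k]) (use i k V22e in \<open>auto simp: P21_def intro!: sum.cong\<close>)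
      ultimately show ?thesis by simp
    qed
    also have "\<dots> = (\<Sum>l<n. V $$ (i+r,l) * P $$ (l,k))"
      using split_sum[OF rn, of "\<lambda>l. V $$ (i+r,l) * P $$ (l,k)"] n'_def by simp
    also have "\<dots> = (V * P) $$ (i+r,k)" using i k nn' by (simp add: mult_entry[OF Vc Pc])
    also have "\<dots> = 0" using Pinv i k nn' by simp
    finally show "(V21 * P11 + V22 * P21) $$ (i,k) = 0\<^sub>m n' r $$ (i,k)" using i k by simp
  qed (use V22c P21c in auto)
  have E2: "P21 * V12 + P22 * V22 = 1\<^sub>m n'"
  proof (rule eq_matI)
    fix i j assume "i < dim_row (1\<^sub>m n' :: real mat)" "j < dim_col (1\<^sub>m n' :: real mat)"
    hence i: "i < n'" and j: "j < n'" by auto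
    have "(P21 * V12 + P22 * V22) $$ (i,j) = (P21 * V12) $$ (i,j) + (P22 * V22) $$ (i,j)"
      using i j P22c V22c by simp
    also have "\<dots> = (\<Sum>l<r. P $$ (i+r,l) * V $$ (l,j+r)) + (\<Sum>l<n'. P $$ (i+r,l+r) * V $$ (l+r,j+r))"
    proof -
      have "(P21 * V12) $$ (i,j) = (\<Sum>l<r. P $$ (i+r,l) * V $$ (l,j+r))"
        by (simp only: mult_entry[OF P21c V12c i j]) (use i j in \<open>auto simp: V12_def P21_def intro!: sum.cong\<close>)
      moreover have "(P22 * V22) $$ (i,j) = (\<Sum>l<n'. P $$ (i+r,l+r) * V $$ (l+r,j+r))"
        by (simp only: mult_entry[OF P22c V22c i j]) (use i j V22e Pc in \<open>auto simp: P22_def br_block_def n'_def intro!: sum.cong\<close>)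
      ultimately show ?thesis by simp
    qed
    also have "\<dots> = (\<Sum>l<n. P $$ (i+r,l) * V $$ (l,j+r))"
      using split_sum[OF rn, of "\<lambda>l. P $$ (i+r,l) * V $$ (l,j+r)"] n'_def by simp
    also have "\<dots> = (P * V) $$ (i+r,j+r)" using i j nn' by (simp add: mult_entry[OF Pc Vc])
    also have "\<dots> = 1\<^sub>m n' $$ (i,j)" using Pinv i j nn' by simp
    finally show "(P21 * V12 + P22 * V22) $$ (i,j) = 1\<^sub>m n' $$ (i,j)" .
  qed (use P22c V22c in auto)
  define U where "U = Q * V21"
  define U' where "U' = V12 * Q"
  have Uc: "U \<in> carrier_mat n' r" and U'c: "U' \<in> carrier_mat r n'"
    using Qc V21c V12c by (auto simp: U_def U'_def)
  have F1m: "U * P11 + P21 = 0\<^sub>m n' r"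
  proof -
    have "Q * (V21 * P11 + V22 * P21) = Q * 0\<^sub>m n' r" using E1 by simp
    also have "\<dots> = 0\<^sub>m n' r" by (rule right_mult_zero_mat[OF Qc])
    also have "Q * (V21 * P11 + V22 * P21) = Q * (V21 * P11) + Q * (V22 * P21)"
      by (rule mult_add_distrib_mat[OF Qc]) (use V21c P11c V22c P21c in auto)
    also have "Q * (V21 * P11) = U * P11" unfolding U_def using Qc V21c P11c by simp
    also have "Q * (V22 * P21) = P21"
    proof -
      have "Q * (V22 * P21) = (Q * V22) * P21" using Qc V22c P21c by simp
      also have "\<dots> = P21" using Qinv P21c by simp
      finally show ?thesis .
    qed
    finally show ?thesis .
  qed
  have F1: "\<forall>i<n'. \<forall>k<r. P21 $$ (i,k) = - ((U * P11) $$ (i,k))"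
  proof (intro allI impI)
    fix i k assume i: "i < n'" and k: "k < r"
    have "(U * P11 + P21) $$ (i,k) = 0" using F1m i k by simp
    thus "P21 $$ (i,k) = - ((U * P11) $$ (i,k))" using i k P21c by simp
  qed
  have F2m: "P21 * U' + P22 = Q"
  proof -
    have "(P21 * V12 + P22 * V22) * Q = Q" using E2 Qc by simp
    also have "(P21 * V12 + P22 * V22) * Q = (P21 * V12) * Q + (P22 * V22) * Q"
      by (rule add_mult_distrib_mat) (use P21c V12c P22c V22c Qc in auto)
    also have "(P21 * V12) * Q = P21 * U'" unfolding U'_def using P21c V12c Qc by simp
    also have "(P22 * V22) * Q = P22"
    proof -
      have "(P22 * V22) * Q = P22 * (V22 * Q)" using P22c V22c Qc by simp
      also have "\<dots> = P22" using Qinv P22c by simp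
      finally show ?thesis .
    qed
    finally show ?thesis .
  qed
  have F2: "\<forall>i<n'. \<forall>j<n'. P22 $$ (i,j) - Q $$ (i,j) = - ((P21 * U') $$ (i,j))"
  proof (intro allI impI)
    fix i j assume i: "i < n'" and j: "j < n'"
    have "(P21 * U' + P22) $$ (i,j) = Q $$ (i,j)" using F2m by simp
    thus "P22 $$ (i,j) - Q $$ (i,j) = - ((P21 * U') $$ (i,j))" using i j P22c by simp
  qed
  have Ueq: "\<forall>k<r. \<forall>i<n'. (\<Sum>l<n'. V $$ (i+r,l+r) * U $$ (l,k)) = V $$ (i+r,k)"
  proof (intro allI impI)
    fix k i assume k: "k < r" and i: "i < n'"
    have "V22 * U = V21"
    proof -
      have "V22 * U = (V22 * Q) * V21" unfolding U_def using V22c Qc V21c by simp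
      also have "\<dots> = V21" using Qinv V21c by simp
      finally show ?thesis .
    qed
    hence "(V22 * U) $$ (i,k) = V $$ (i+r,k)" using i k by (simp add: V21_def)
    moreover have "(V22 * U) $$ (i,k) = (\<Sum>l<n'. V $$ (i+r,l+r) * U $$ (l,k))"
      by (simp only: mult_entry[OF V22c Uc i k]) (use i V22e in \<open>auto intro!: sum.cong\<close>)
    ultimately show "(\<Sum>l<n'. V $$ (i+r,l+r) * U $$ (l,k)) = V $$ (i+r,k)" by simp
  qed
  have U'eq: "\<forall>k<r. \<forall>j<n'. (\<Sum>l<n'. V $$ (j+r,l+r) * U' $$ (k,l)) = V $$ (k,j+r)"
  proof (intro allI impI)
    fix k j assume k: "k < r" and j: "j < n'"
    have "U' * V22 = V12"
    proof -
      have "U' * V22 = V12 * (Q * V22)" unfolding U'_def using V22c Qc V12c by simp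
      also have "\<dots> = V12" using Qinv V12c by simp
      finally show ?thesis .
    qed
    hence "(U' * V22) $$ (k,j) = V $$ (k,j+r)" using j k by (simp add: V12_def)
    moreover have "(U' * V22) $$ (k,j) = (\<Sum>l<n'. V $$ (j+r,l+r) * U' $$ (k,l))"
      by (simp only: mult_entry[OF U'c V22c k j]) (use j V22e Vsym nn' in \<open>auto intro!: sum.cong\<close>)
    ultimately show "(\<Sum>l<n'. V $$ (j+r,l+r) * U' $$ (k,l)) = V $$ (k,j+r)" by simp
  qed
  have Pcol: "\<forall>k<n. \<forall>i<n. (\<Sum>l<n. V $$ (i,l) * P $$ (l,k)) = (if i = k then 1 else 0)"
  proof (intro allI impI)
    fix k i assume k: "k < n" and i: "i < n"
    have "(V * P) $$ (i,k) = (if i = k then 1 else 0)" using Pinv i k by simp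
    thus "(\<Sum>l<n. V $$ (i,l) * P $$ (l,k)) = (if i = k then 1 else 0)"
      by (simp only: mult_entry[OF Vc Pc i k])
  qed
  define \<beta> where "\<beta> = (M + M * (3 * M / m)) / ((real n - 1) * m)"
  define \<gamma> where "\<gamma> = 1 / (m * (real n - 2))"
  have Dgpos: "(real n - 1) * m > 0" using n3 mpos by simp
  have offM22: "\<forall>i<n'. \<forall>j<n'. i \<noteq> j \<longrightarrow> V $$ (i+r,j+r) \<le> M" using Voff nn' by auto
  have diag22: "\<forall>i<n'. (real n - 1) * m \<le> V $$ (i+r,i+r)" using Dg nn' by auto
  have Ub: "\<forall>k<r. \<forall>l<n'. \<bar>U $$ (l,k)\<bar> \<le> \<beta>"
  proof (intro allI impI)
    fix k l assume k: "k < r" and l: "l < n'"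
    have yb: "\<forall>i<n'. \<bar>V $$ (i+r,k)\<bar> \<le> M"
    proof (intro allI impI)
      fix i assume "i < n'"
      hence "m \<le> V $$ (i+r,k)" "V $$ (i+r,k) \<le> M" using Voff k nn' by auto
      thus "\<bar>V $$ (i+r,k)\<bar> \<le> M" using mpos by simp
    qed
    have "\<forall>i<n'. \<bar>U $$ (i,k)\<bar> * ((real n - 1) * m) \<le> M + M * (3 * M / m)"
      by (rule qfhyp.ulem[OF qV22 offM22 diag22 Dgpos, of "\<lambda>l. U $$ (l,k)" "\<lambda>i. V $$ (i+r,k)"])
         (use Ueq k yb in auto)
    thus "\<bar>U $$ (l,k)\<bar> \<le> \<beta>" using l Dgpos by (simp add: \<beta>_def pos_le_divide_eq)
  qed
  have U'b: "\<forall>k<r. \<forall>l<n'. \<bar>U' $$ (k,l)\<bar> \<le> \<beta>"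
  proof (intro allI impI)
    fix k l assume k: "k < r" and l: "l < n'"
    have yb: "\<forall>i<n'. \<bar>V $$ (k,i+r)\<bar> \<le> M"
    proof (intro allI impI)
      fix i assume "i < n'"
      hence "m \<le> V $$ (k,i+r)" "V $$ (k,i+r) \<le> M" using Voff k nn' by auto
      thus "\<bar>V $$ (k,i+r)\<bar> \<le> M" using mpos by simp
    qed
    have "\<forall>i<n'. \<bar>U' $$ (k,i)\<bar> * ((real n - 1) * m) \<le> M + M * (3 * M / m)"
      by (rule qfhyp.ulem[OF qV22 offM22 diag22 Dgpos, of "\<lambda>l. U' $$ (k,l)" "\<lambda>i. V $$ (k,i+r)"])
         (use U'eq k yb in auto)
    thus "\<bar>U' $$ (k,l)\<bar> \<le> \<beta>" using l Dgpos by (simp add: \<beta>_def pos_le_divide_eq)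
  qed
  have Pb: "\<forall>k<r. \<forall>j<n. \<bar>P $$ (j,k)\<bar> \<le> \<gamma>"
  proof (intro allI impI)
    fix k j assume k: "k < r" and j: "j < n"
    have kn: "k < n" using k nn' by simp
    have "\<forall>j<n. \<bar>P $$ (j,k)\<bar> \<le> 1 / (m * (real n - 2))"
      by (rule qfhyp.plem[OF qV kn]) (use Pcol kn in auto)
    thus "\<bar>P $$ (j,k)\<bar> \<le> \<gamma>" using j by (simp add: \<gamma>_def)
  qed
  have P21b: "\<forall>i<n'. \<forall>k<r. \<bar>P21 $$ (i,k)\<bar> \<le> real r * \<beta> * \<gamma>"
  proof (intro allI impI)
    fix i k assume i: "i < n'" and k: "k < r"
    have "\<bar>P21 $$ (i,k)\<bar> = \<bar>\<Sum>k'<r. U $$ (i,k') * P11 $$ (k',k)\<bar>"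
      using F1 i k by (simp add: mult_entry[OF Uc P11c i k])
    also have "\<dots> \<le> real r * \<beta> * \<gamma>"
      by (rule sum_bound) (use Ub Pb i k nn' in \<open>auto simp: P11_def\<close>)
    finally show "\<bar>P21 $$ (i,k)\<bar> \<le> real r * \<beta> * \<gamma>" .
  qed
  define B where "B = real r * (real r * \<beta> * \<gamma>) * \<beta>"
  have Db: "\<forall>i<n'. \<forall>j<n'. \<bar>P22 $$ (i,j) - Q $$ (i,j)\<bar> \<le> B"
  proof (intro allI impI)
    fix i j assume i: "i < n'" and j: "j < n'"
    have "\<bar>P22 $$ (i,j) - Q $$ (i,j)\<bar> = \<bar>\<Sum>k<r. P21 $$ (i,k) * U' $$ (k,j)\<bar>"
      using F2 i j by (simp add: mult_entry[OF P21c U'c i j])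
    also have "\<dots> \<le> B" unfolding B_def
      by (rule sum_bound) (use P21b U'b i j in auto)
    finally show "\<bar>P22 $$ (i,j) - Q $$ (i,j)\<bar> \<le> B" .
  qed
  define X where "X = br_block (mat_inv V - inv_diag V) r - (mat_inv (br_block V r) - inv_diag (br_block V r))"
  have Xdim: "dim_row X = n'" "dim_col X = n'"
    using Vc by (auto simp: X_def inv_diag_def br_block_def n'_def)
  have Xe: "\<forall>i<n'. \<forall>j<n'. X $$ (i,j) = P22 $$ (i,j) - Q $$ (i,j)"
    using Vc Pc Qc by (auto simp: X_def inv_diag_def br_block_def n'_def P_def Q_def V22_def P22_def)
  have mx: "max_norm X \<le> B"
  proof -
    have S: "{\<bar>X $$ (i,j)\<bar> | i j. i < dim_row X \<and> j < dim_col X} = (\<lambda>(i,j). \<bar>X $$ (i,j)\<bar>) ` ({..<n'} \<times> {..<n'})"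
      using Xdim by auto
    have "(0,0) \<in> {..<n'} \<times> {..<n'}" using n'3 by simp
    hence ne: "{..<n'} \<times> {..<n'} \<noteq> {}" by blast
    show ?thesis unfolding max_norm_def S
      using Db Xe ne by (subst Max_le_iff) auto
  qed
  have b0: "0 \<le> \<beta>" using mpos Dgpos c0 by (simp add: \<beta>_def M_def)
  have g0: "0 \<le> \<gamma>" using mpos n3 by (simp add: \<gamma>_def)
  have bb: "\<beta> \<le> 4 * (bb/cc)^2 / (real n - 1)"
  proof -
    define k where "k = bb / cc"
    have k1: "k \<ge> 1" using c0 cb by (simp add: k_def field_simps)
    have "\<beta> = (k + 3 * k^2) / (real n - 1)"
      using c0 bpos n3 by (simp add: \<beta>_def k_def m_def M_def field_simps power2_eq_square)
    also have "\<dots> \<le> 4 * k^2 / (real n - 1)"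
    proof -
      have "k \<le> k^2" using k1 by (simp add: power2_eq_square)
      thus ?thesis using n3 by (intro divide_right_mono) auto
    qed
    finally show ?thesis by (simp add: k_def)
  qed
  have gb: "\<gamma> \<le> bb / (real n - 2)" by (simp add: \<gamma>_def m_def)
  have "B \<le> 112 * (real r)^2 * bb^6 / (real n^3 * cc^5)"
    unfolding B_def by (rule final_arith[OF c0 cb n3 b0 bb g0 gb])
  thus ?thesis using mx by (simp add: X_def)
qed


theorem lemma10:
  fixes r :: nat
  assumes "r > 0"
  shows "\<exists>C::real. \<forall>b c :: nat \<Rightarrow> real. (\<forall>n. 0 < c n \<and> c n \<le> b n) \<longrightarrow>
    (\<exists>N. \<forall>n\<ge>N. \<forall>V. n \<ge> 3 \<and> n > r \<and> V \<in> class_L n (1 / b n) (1 / c n) \<and> transpose_mat V = V \<longrightarrow>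
       max_norm (br_block (mat_inv V - inv_diag V) r
                 - (mat_inv (br_block V r) - inv_diag (br_block V r)))
         \<le> C * b n ^ 6 / (real n ^ 3 * c n ^ 5))"
proof (intro exI[of _ "112 * (real r)^2"] allI impI)
  fix b c :: "nat \<Rightarrow> real"
  assume bc: "\<forall>n. 0 < c n \<and> c n \<le> b n"
  show "\<exists>N. \<forall>n\<ge>N. \<forall>V. n \<ge> 3 \<and> n > r \<and> V \<in> class_L n (1 / b n) (1 / c n) \<and> transpose_mat V = V \<longrightarrow>
       max_norm (br_block (mat_inv V - inv_diag V) r
                 - (mat_inv (br_block V r) - inv_diag (br_block V r)))
         \<le> 112 * (real r)^2 * b n ^ 6 / (real n ^ 3 * c n ^ 5)"
  proof (intro exI[of _ "r + 3"] allI impI)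
    fix n V assume n: "r + 3 \<le> n"
      and H: "n \<ge> 3 \<and> n > r \<and> V \<in> class_L n (1 / b n) (1 / c n) \<and> transpose_mat V = V"
    show "max_norm (br_block (mat_inv V - inv_diag V) r
                 - (mat_inv (br_block V r) - inv_diag (br_block V r)))
         \<le> 112 * (real r)^2 * b n ^ 6 / (real n ^ 3 * c n ^ 5)"
      using main_bound[of "c n" "b n" r n V] bc n H by auto
  qed
qed

end
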